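(* Let $N=(V,A)$ be a tree-based network and let $A'\subseteq A$. Then $A'$ is the set of arcs of a support tree for $N$ if and only if $A'$ is the union of the set of arboreal arcs of $N$ and (the arcs of $N$ corresponding to the edges of) a supporting set for $\mathcal{J}_N$.
   Context: A phylogenetic network on a nonempty finite set $X$ is a rooted acyclic digraph with no parallel arcs such that: the unique root has out-degree at least one; $X$ is exactly the set of vertices of out-degree zero (leaves), each of in-degree one; every other vertex either has in-degree one and out-degree at least two (a tree vertex) or in-degree at least two and out-degree one (a reticulation). If $|X|=1$, the network may also consist of the single vertex in $X$. An omnian is a non-leaf vertex all of whose children are reticulations. $N$ is tree-based if it has a spanning tree rooted at the root of $N$ all of whose leaves lie in $X$; a support tree for $N$ is such a spanning tree, i.e., a subgraph of $N$ with vertex set $V$ that is a directed tree rooted at the root of $N$ whose leaf set is exactly $X$ (equivalently, a subdivision of a phylogenetic $X$-tree embedded in $N$ using all vertices of $N$). Let $R_t$ be the set of reticulations of $N$ with no reticulation parent, and $Q_t$ the set of vertices of $N$ having a child in $R_t$. $\mathcal{J}_N$ is the bipartite graph with vertex bipartition $\{Q_t,R_t\}$ and an edge $\{q,r\}$ for each arc $(q,r)\in A$ with $q\in Q_t$, $r\in R_t$; each edge is identified with the corresponding arc of $N$. A supporting set for $\mathcal{J}_N$ is a set $E$ of edges of $\mathcal{J}_N$ such that each omnian in $Q_t$ is incident with at least one edge of $E$ and each vertex of $R_t$ is incident with exactly one edge of $E$. An arc $(u,v)$ of $N$ is arboreal if $u$ is a reticulation, or $v$ is a tree vertex or a leaf.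 *)

theory Defs
  imports Main
begin

text \<open>A directed graph is given by a vertex set V and an arc set A of ordered pairs
(so there are no parallel arcs).\<close>

definition parents :: "('a \<times> 'a) set \<Rightarrow> 'a \<Rightarrow> 'a set" where
  "parents A v = {u. (u, v) \<in> A}"

definition children :: "('a \<times> 'a) set \<Rightarrow> 'a \<Rightarrow> 'a set" where
  "children A v = {w. (v, w) \<in> A}"

definition indeg :: "('a \<times> 'a) set \<Rightarrow> 'a \<Rightarrow> nat" where
  "indeg A v = card (parents A v)"

definition outdeg :: "('a \<times> 'a) set \<Rightarrow> 'a \<Rightarrow> nat" where
  "outdeg A v = card (children A v)"

definition is_root :: "'a set \<Rightarrow> ('a \<times> 'a) set \<Rightarrow> 'a \<Rightarrow> bool" where
  "is_root V A r \<longleftrightarrow> r \<in> V \<and> indeg A r = 0 \<and>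
     (\<forall>v\<in>V. indeg A v = 0 \<longrightarrow> v = r) \<and> (\<forall>v\<in>V. (r, v) \<in> A\<^sup>*)"

definition phylo_network :: "'a set \<Rightarrow> ('a \<times> 'a) set \<Rightarrow> 'a set \<Rightarrow> bool" where
  "phylo_network V A X \<longleftrightarrow>
     finite V \<and> A \<subseteq> V \<times> V \<and> X \<noteq> {} \<and>
     ((card X = 1 \<and> V = X \<and> A = {}) \<or>
      (acyclic A \<and>
       (\<exists>r. is_root V A r \<and> outdeg A r \<ge> 1) \<and>
       X = {v \<in> V. outdeg A v = 0} \<and>
       (\<forall>x\<in>X. indeg A x = 1) \<and>
       (\<forall>v\<in>V - X. indeg A v \<noteq> 0 \<longrightarrow>
          (indeg A v = 1 \<and> outdeg A v \<ge> 2) \<or> (indeg A v \<ge> 2 \<and> outdeg A v = 1))))"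

definition reticulation :: "'a set \<Rightarrow> ('a \<times> 'a) set \<Rightarrow> 'a \<Rightarrow> bool" where
  "reticulation V A v \<longleftrightarrow> v \<in> V \<and> indeg A v \<ge> 2 \<and> outdeg A v = 1"

definition tree_vertex :: "'a set \<Rightarrow> ('a \<times> 'a) set \<Rightarrow> 'a \<Rightarrow> bool" where
  "tree_vertex V A v \<longleftrightarrow> v \<in> V \<and> indeg A v = 1 \<and> outdeg A v \<ge> 2"

definition omnian :: "'a set \<Rightarrow> ('a \<times> 'a) set \<Rightarrow> 'a set \<Rightarrow> 'a \<Rightarrow> bool" where
  "omnian V A X v \<longleftrightarrow> v \<in> V \<and> v \<notin> X \<and> (\<forall>w \<in> children A v. reticulation V A w)"

definition support_tree :: "'a set \<Rightarrow> ('a \<times> 'a) set \<Rightarrow> 'a set \<Rightarrow> ('a \<times> 'a) set \<Rightarrow> bool" where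
  "support_tree V A X A' \<longleftrightarrow> A' \<subseteq> A \<and>
     (\<exists>r. is_root V A r \<and> is_root V A' r \<and> (\<forall>v\<in>V - {r}. indeg A' v = 1)) \<and>
     {v \<in> V. outdeg A' v = 0} = X"

definition tree_based :: "'a set \<Rightarrow> ('a \<times> 'a) set \<Rightarrow> 'a set \<Rightarrow> bool" where
  "tree_based V A X \<longleftrightarrow> (\<exists>A'. support_tree V A X A')"

definition R_t :: "'a set \<Rightarrow> ('a \<times> 'a) set \<Rightarrow> 'a set" where
  "R_t V A = {r. reticulation V A r \<and> (\<forall>p \<in> parents A r. \<not> reticulation V A p)}"

definition Q_t :: "'a set \<Rightarrow> ('a \<times> 'a) set \<Rightarrow> 'a set" where
  "Q_t V A = {q \<in> V. \<exists>r \<in> R_t V A. (q, r) \<in> A}"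

text \<open>Edges of the bipartite graph J_N, identified with the corresponding arcs of N.\<close>
definition J_edges :: "'a set \<Rightarrow> ('a \<times> 'a) set \<Rightarrow> ('a \<times> 'a) set" where
  "J_edges V A = {(q, r) \<in> A. q \<in> Q_t V A \<and> r \<in> R_t V A}"

definition supporting_set :: "'a set \<Rightarrow> ('a \<times> 'a) set \<Rightarrow> 'a set \<Rightarrow> ('a \<times> 'a) set \<Rightarrow> bool" where
  "supporting_set V A X E \<longleftrightarrow> E \<subseteq> J_edges V A \<and>
     (\<forall>q \<in> Q_t V A. omnian V A X q \<longrightarrow> (\<exists>r. (q, r) \<in> E)) \<and>
     (\<forall>r \<in> R_t V A. \<exists>!q. (q, r) \<in> E)"

definition arboreal_arcs :: "'a set \<Rightarrow> ('a \<times> 'a) set \<Rightarrow> 'a set \<Rightarrow> ('a \<times> 'a) set" where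
  "arboreal_arcs V A X = {(u, v) \<in> A. reticulation V A u \<or> tree_vertex V A v \<or> v \<in> X}"

end

theory Submission
  imports Defs
begin

lemma fin_par: "finite B \<Longrightarrow> finite (parents B v)"
  unfolding parents_def by (rule finite_subset[of _ "fst ` B"]) force+

lemma fin_ch: "finite B \<Longrightarrow> finite (children B v)"
  unfolding children_def by (rule finite_subset[of _ "snd ` B"]) force+

lemma indeg0: "finite B \<Longrightarrow> indeg B v = 0 \<longleftrightarrow> (\<forall>u. (u,v) \<notin> B)"
  using fin_par[of B v] unfolding indeg_def by (auto simp: parents_def)

lemma outdeg0: "finite B \<Longrightarrow> outdeg B v = 0 \<longleftrightarrow> (\<forall>u. (v,u) \<notin> B)"
  using fin_ch[of B v] unfolding outdeg_def by (auto simp: children_def)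

lemma indeg1: "indeg B v = 1 \<longleftrightarrow> (\<exists>u. (u,v)\<in>B \<and> (\<forall>u'. (u',v)\<in>B \<longrightarrow> u'=u))"
  unfolding indeg_def parents_def by (auto simp: card_1_singleton_iff)

lemma outdeg1: "outdeg B v = 1 \<longleftrightarrow> (\<exists>u. (v,u)\<in>B \<and> (\<forall>u'. (v,u')\<in>B \<longrightarrow> u'=u))"
  unfolding outdeg_def children_def by (auto simp: card_1_singleton_iff)

lemma ret_child: "reticulation V A v \<Longrightarrow> \<exists>w. (v,w)\<in>A \<and> (\<forall>w'. (v,w')\<in>A \<longrightarrow> w'=w)"
  unfolding reticulation_def using outdeg1 by metis

lemma tree_par: "tree_vertex V A v \<Longrightarrow> (u,v)\<in>A \<Longrightarrow> (u',v)\<in>A \<Longrightarrow> u = u'"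
  unfolding tree_vertex_def using indeg1 by metis

lemma ret_not_tree: "reticulation V A v \<Longrightarrow> \<not> tree_vertex V A v"
  unfolding reticulation_def tree_vertex_def by auto

lemma facts:
  assumes "phylo_network V A X"
  shows "finite A" "A \<subseteq> V\<times>V" "acyclic A" "\<forall>v\<in>X. v\<in>V \<and> (\<forall>w. (v,w) \<notin> A)"
    "\<forall>v\<in>V. (\<forall>w. (v,w)\<notin>A) \<longrightarrow> v\<in>X"
    "\<forall>u v. (u,v)\<in>A \<longrightarrow> v\<in>X \<longrightarrow> (\<forall>u'. (u',v)\<in>A \<longrightarrow> u'=u)"
    "\<forall>u v. (u,v)\<in>A \<longrightarrow> v\<notin>X \<longrightarrow> tree_vertex V A v \<or> reticulation V A v"
proof -
  have fV: "finite V" and AV: "A \<subseteq> V\<times>V" using assms unfolding phylo_network_def by auto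
  show fA: "finite A" using fV AV by (meson finite_SigmaI finite_subset)
  show "A \<subseteq> V\<times>V" by fact
  have D: "(V = X \<and> A = {}) \<or> (acyclic A \<and> X = {v \<in> V. outdeg A v = 0} \<and>
       (\<forall>x\<in>X. indeg A x = 1) \<and>
       (\<forall>v\<in>V - X. indeg A v \<noteq> 0 \<longrightarrow>
          (indeg A v = 1 \<and> outdeg A v \<ge> 2) \<or> (indeg A v \<ge> 2 \<and> outdeg A v = 1)))"
    using assms unfolding phylo_network_def by blast
  show "acyclic A" using D by (auto simp: acyclic_def)
  show "\<forall>v\<in>X. v\<in>V \<and> (\<forall>w. (v,w) \<notin> A)" using D outdeg0[OF fA] by auto
  show "\<forall>v\<in>V. (\<forall>w. (v,w)\<notin>A) \<longrightarrow> v\<in>X" using D outdeg0[OF fA] by auto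
  show "\<forall>u v. (u,v)\<in>A \<longrightarrow> v\<in>X \<longrightarrow> (\<forall>u'. (u',v)\<in>A \<longrightarrow> u'=u)"
  proof (intro allI impI)
    fix u v u' assume h: "(u,v)\<in>A" "v\<in>X" "(u',v)\<in>A"
    then have "indeg A v = 1" using D by auto
    then show "u' = u" using h indeg1 by metis
  qed
  show "\<forall>u v. (u,v)\<in>A \<longrightarrow> v\<notin>X \<longrightarrow> tree_vertex V A v \<or> reticulation V A v"
  proof (intro allI impI)
    fix u v assume uv: "(u,v)\<in>A" "v \<notin> X"
    hence "v \<in> V" using AV by auto
    moreover have "indeg A v \<noteq> 0" using indeg0[OF fA] uv by auto
    ultimately show "tree_vertex V A v \<or> reticulation V A v"
      using D uv unfolding tree_vertex_def reticulation_def by auto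
  qed
qed

lemma st_par:
  assumes pn: "phylo_network V A X" and st: "support_tree V A X S"
    and uv: "(u,v)\<in>S" "(u',v)\<in>S"
  shows "u = u'"
proof -
  from st obtain r where r: "is_root V A r" "\<forall>v\<in>V - {r}. indeg S v = 1" and SA: "S \<subseteq> A"
    unfolding support_tree_def by blast
  have fA: "finite A" using facts[OF pn] by auto
  have "v \<in> V" using facts(2)[OF pn] SA uv by auto
  moreover have "v \<noteq> r" using r(1) indeg0[OF fA] SA uv unfolding is_root_def by auto
  ultimately have "indeg S v = 1" using r by auto
  then show ?thesis using uv indeg1 by metis
qed

lemma st_child:
  assumes pn: "phylo_network V A X" and st: "support_tree V A X S"
    and v: "v \<in> V" "v \<notin> X"
  shows "\<exists>w. (v,w)\<in>S"
proof -
  have SA: "S \<subseteq> A" and L: "{v \<in> V. outdeg S v = 0} = X" using st unfolding support_tree_def by auto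
  have fS: "finite S" using facts(1)[OF pn] SA finite_subset by auto
  have "outdeg S v \<noteq> 0" using L v by auto
  then show ?thesis using outdeg0[OF fS] by auto
qed

lemma st_arb:
  assumes pn: "phylo_network V A X" and st: "support_tree V A X S"
  shows "arboreal_arcs V A X \<subseteq> S"
proof
  fix e assume e: "e \<in> arboreal_arcs V A X"
  then obtain u v where e': "e = (u,v)" "(u,v)\<in>A"
    and c: "reticulation V A u \<or> tree_vertex V A v \<or> v \<in> X"
    unfolding arboreal_arcs_def by auto
  from st obtain r where r: "is_root V A r" "\<forall>v\<in>V - {r}. indeg S v = 1" and SA: "S \<subseteq> A"
    unfolding support_tree_def by blast
  note F = facts[OF pn]
  have vV: "v \<in> V" "u \<in> V" using F(2) e' by auto
  have "v \<noteq> r" using r(1) indeg0[OF F(1)] e' unfolding is_root_def by auto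
  then have iv: "indeg S v = 1" using r vV by auto
  then obtain p where p: "(p,v) \<in> S" using indeg1 by metis
  from c show "e \<in> S"
  proof (elim disjE)
    assume "reticulation V A u"
    then obtain w where w: "(u,w)\<in>A" "\<forall>w'. (u,w')\<in>A \<longrightarrow> w'=w" using ret_child by metis
    have "u \<notin> X" using F(4) w by auto
    then obtain w' where w': "(u,w')\<in>S" using st_child[OF pn st] vV by blast
    then have "(u,w')\<in>A" using SA by blast
    then have "w' = v" using w e'(2) by metis
    then show ?thesis using w' e'(1) by simp
  next
    assume "tree_vertex V A v"
    moreover have "(p,v)\<in>A" using p SA by blast
    ultimately have "p = u" using tree_par e'(2) by metis
    then show ?thesis using p e' by simp
  next
    assume "v \<in> X"
    moreover have "(p,v)\<in>A" using p SA by blast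
    ultimately have "p = u" using F(6) e'(2) by metis
    then show ?thesis using p e' by simp
  qed
qed

lemma reach:
  assumes fin: "finite S" and ac: "acyclic S" and SV: "S \<subseteq> V\<times>V"
    and par: "\<forall>v\<in>V-{r}. \<exists>u. (u,v)\<in>S"
  shows "v \<in> V \<Longrightarrow> (r,v)\<in>S\<^sup>*"
proof (induct v rule: wf_induct_rule[OF finite_acyclic_wf[OF fin ac]])
  case (1 x)
  show ?case
  proof (cases "x = r")
    case True then show ?thesis by simp
  next
    case False
    have "x \<in> V - {r}" using False 1(2) by blast
    then obtain u where u: "(u,x)\<in>S" using par by blast
    then have "u \<in> V" using SV by blast
    then have "(r,u)\<in>S\<^sup>*" using 1(1) u by blast
    then show ?thesis using u by (meson rtrancl.rtrancl_into_rtrancl)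
  qed
qed

lemma ret_notX: "phylo_network V A X \<Longrightarrow> reticulation V A v \<Longrightarrow> v \<notin> X"
  using facts(4) ret_child by metis

lemma fwd:
  assumes pn: "phylo_network V A X" and st: "support_tree V A X S"
  shows "supporting_set V A X (S - arboreal_arcs V A X)"
proof -
  note F = facts[OF pn]
  have SA: "S \<subseteq> A" using st unfolding support_tree_def by blast
  let ?E = "S - arboreal_arcs V A X"
  have nonarb: "\<not> reticulation V A u \<and> \<not> tree_vertex V A v \<and> v \<notin> X"
    if "(u,v) \<in> ?E" for u v using that SA unfolding arboreal_arcs_def by blast
  have EJ: "?E \<subseteq> J_edges V A"
  proof
    fix e assume e: "e \<in> ?E"
    obtain u v where uv: "e = (u,v)" by fastforce
    have uvS: "(u,v) \<in> S" and uvA: "(u,v) \<in> A" using e uv SA by auto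
    have n: "\<not> reticulation V A u" "\<not> tree_vertex V A v" "v \<notin> X" using nonarb e uv by auto
    have rv: "reticulation V A v" using F(7) uvA n by blast
    have "\<forall>p \<in> parents A v. \<not> reticulation V A p"
    proof
      fix p assume p: "p \<in> parents A v"
      show "\<not> reticulation V A p"
      proof
        assume rp: "reticulation V A p"
        have "(p,v) \<in> A" using p unfolding parents_def by simp
        then have "(p,v) \<in> arboreal_arcs V A X" using rp unfolding arboreal_arcs_def by blast
        then have "(p,v) \<in> S" using st_arb[OF pn st] by blast
        then have "p = u" using st_par[OF pn st _ uvS] by blast
        then show False using rp n by simp
      qed
    qed
    then have vR: "v \<in> R_t V A" using rv unfolding R_t_def by blast
    have "u \<in> V" using F(2) uvA by blast
    then have "u \<in> Q_t V A" using vR uvA unfolding Q_t_def by blast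
    then show "e \<in> J_edges V A" using vR uvA uv unfolding J_edges_def by blast
  qed
  have om: "\<forall>q \<in> Q_t V A. omnian V A X q \<longrightarrow> (\<exists>r. (q, r) \<in> ?E)"
  proof (intro ballI impI)
    fix q assume q: "q \<in> Q_t V A" and o: "omnian V A X q"
    obtain r0 where r0: "r0 \<in> R_t V A" "(q,r0) \<in> A" using q unfolding Q_t_def by blast
    have qnr: "\<not> reticulation V A q" using r0 unfolding R_t_def parents_def by blast
    obtain w where w: "(q,w) \<in> S" using st_child[OF pn st] o unfolding omnian_def by blast
    have "(q,w) \<in> A" using w SA by blast
    then have rw: "reticulation V A w" using o unfolding omnian_def children_def by blast
    have "w \<notin> X" using ret_notX[OF pn rw] .
    moreover have "\<not> tree_vertex V A w" using ret_not_tree[OF rw] .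
    ultimately have "(q,w) \<notin> arboreal_arcs V A X" using qnr unfolding arboreal_arcs_def by blast
    then show "\<exists>r. (q, r) \<in> ?E" using w by blast
  qed
  have un: "\<forall>r \<in> R_t V A. \<exists>!q. (q, r) \<in> ?E"
  proof
    fix r assume r: "r \<in> R_t V A"
    have rr: "reticulation V A r" using r unfolding R_t_def by blast
    then have rV: "r \<in> V" unfolding reticulation_def by blast
    from st obtain rt where rt: "is_root V A rt" "\<forall>v\<in>V - {rt}. indeg S v = 1"
      unfolding support_tree_def by blast
    have "r \<noteq> rt" using rt(1) rr unfolding is_root_def reticulation_def by auto
    then have "indeg S r = 1" using rt(2) rV by blast
    then obtain u where u: "(u,r) \<in> S" using indeg1 by metis
    have "(u,r) \<in> A" using u SA by blast
    then have "\<not> reticulation V A u" using r unfolding R_t_def parents_def by blast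
    moreover have "r \<notin> X" using ret_notX[OF pn rr] .
    moreover have "\<not> tree_vertex V A r" using ret_not_tree[OF rr] .
    ultimately have "(u,r) \<in> ?E" using u unfolding arboreal_arcs_def by blast
    moreover have "\<And>u'. (u',r) \<in> ?E \<Longrightarrow> u' = u" using st_par[OF pn st u] by blast
    ultimately show "\<exists>!q. (q, r) \<in> ?E" by blast
  qed
  show ?thesis unfolding supporting_set_def using EJ om un by blast
qed

lemma bwd:
  assumes pn: "phylo_network V A X" and T: "support_tree V A X T"
    and ss: "supporting_set V A X E"
  shows "support_tree V A X (arboreal_arcs V A X \<union> E)"
proof -
  note F = facts[OF pn]
  let ?B = "arboreal_arcs V A X"
  let ?S = "?B \<union> E"
  have EJ: "E \<subseteq> J_edges V A" using ss unfolding supporting_set_def by blast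
  have BA: "?B \<subseteq> A" unfolding arboreal_arcs_def by blast
  have SA: "?S \<subseteq> A" using EJ BA unfolding J_edges_def by blast
  have BT: "?B \<subseteq> T" using st_arb[OF pn T] .
  from T obtain r where r: "is_root V A r" unfolding support_tree_def by blast
  have fS: "finite ?S" using F(1) SA finite_subset by blast
  have rV: "r \<in> V" using r unfolding is_root_def by blast
  have nopar_r: "\<And>u. (u,r) \<notin> A" using r indeg0[OF F(1)] unfolding is_root_def by blast
  have Epar: "\<And>u v. (u,v) \<in> E \<Longrightarrow> v \<in> R_t V A \<and> u \<in> Q_t V A \<and> (u,v) \<in> A"
    using EJ unfolding J_edges_def by blast
  have upar: "\<exists>u. (u,v)\<in>?S \<and> (\<forall>u'. (u',v)\<in>?S \<longrightarrow> u'=u)" if v: "v \<in> V" "v \<noteq> r" for v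
  proof -
    have "indeg A v \<noteq> 0" using r v unfolding is_root_def by blast
    then obtain u0 where u0: "(u0,v) \<in> A" using indeg0[OF F(1), of v] by auto
    have Bun: "\<And>u u'. (u,v) \<in> ?B \<Longrightarrow> (u',v) \<in> ?B \<Longrightarrow> u = u'"
      using st_par[OF pn T] BT by blast
    show ?thesis
    proof (cases "v \<in> R_t V A")
      case True
      then have rv: "reticulation V A v" and np: "\<forall>p \<in> parents A v. \<not> reticulation V A p"
        unfolding R_t_def by blast+
      have noB: "\<And>u. (u,v) \<notin> ?B"
      proof
        fix u assume "(u,v) \<in> ?B"
        then have "(u,v) \<in> A" "reticulation V A u \<or> tree_vertex V A v \<or> v \<in> X"
          unfolding arboreal_arcs_def by blast+
        then show False using np ret_not_tree[OF rv] ret_notX[OF pn rv]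
          unfolding parents_def by blast
      qed
      obtain q where q: "(q,v) \<in> E" "\<forall>q'. (q',v) \<in> E \<longrightarrow> q' = q"
        using ss True unfolding supporting_set_def by metis
      show ?thesis using q noB by blast
    next
      case False
      have "(u0,v) \<in> ?B \<or> (\<exists>p. (p,v) \<in> ?B)"
      proof (cases "v \<in> X")
        case True then show ?thesis using u0 unfolding arboreal_arcs_def by blast
      next
        case nX: False
        then have "tree_vertex V A v \<or> reticulation V A v" using F(7) u0 by blast
        then show ?thesis
        proof
          assume "tree_vertex V A v" then show ?thesis using u0 unfolding arboreal_arcs_def by blast
        next
          assume rv: "reticulation V A v"
          then obtain p where "p \<in> parents A v" "reticulation V A p"
            using False unfolding R_t_def by blast
          then have "(p,v) \<in> ?B" unfolding arboreal_arcs_def parents_def by blast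
          then show ?thesis by blast
        qed
      qed
      then obtain p where p: "(p,v) \<in> ?B" by blast
      have "\<And>u. (u,v) \<notin> E" using Epar False by blast
      then show ?thesis using p Bun by blast
    qed
  qed
  have indS: "\<forall>v\<in>V - {r}. indeg ?S v = 1"
  proof
    fix v assume "v \<in> V - {r}"
    then show "indeg ?S v = 1" using upar[of v] indeg1[of ?S v] by blast
  qed
  have leaf: "{v \<in> V. outdeg ?S v = 0} = X"
  proof (intro equalityI subsetI)
    fix v assume "v \<in> X"
    then have "v \<in> V" "\<And>w. (v,w) \<notin> ?S" using F(4) SA by blast+
    then show "v \<in> {v \<in> V. outdeg ?S v = 0}" using outdeg0[OF fS] by blast
  next
    fix v assume v: "v \<in> {v \<in> V. outdeg ?S v = 0}"
    then have vV: "v \<in> V" and noch: "\<And>w. (v,w) \<notin> ?S" using outdeg0[OF fS] by blast+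
    show "v \<in> X"
    proof (rule ccontr)
      assume nX: "v \<notin> X"
      obtain w0 where w0: "(v,w0) \<in> A" using F(5) vV nX by blast
      have nr: "\<not> reticulation V A v"
      proof
        assume "reticulation V A v"
        then have "(v,w0) \<in> ?B" using w0 unfolding arboreal_arcs_def by blast
        then show False using noch by blast
      qed
      have chret: "reticulation V A w" if w: "(v,w) \<in> A" for w
      proof -
        have "(v,w) \<notin> ?B" using noch by blast
        then have "\<not> tree_vertex V A w" "w \<notin> X" using w unfolding arboreal_arcs_def by blast+
        then show ?thesis using F(7) w by blast
      qed
      have om: "omnian V A X v" unfolding omnian_def children_def using vV nX chret by blast
      show False
      proof (cases "v \<in> Q_t V A")
        case True
        then obtain w where "(v,w) \<in> E" using ss om unfolding supporting_set_def by blast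
        then show False using noch by blast
      next
        case False
        obtain w where wT: "(v,w) \<in> T" using st_child[OF pn T vV nX] by blast
        have TA: "T \<subseteq> A" using T unfolding support_tree_def by blast
        have wA: "(v,w) \<in> A" using wT TA by blast
        have rw: "reticulation V A w" using chret wA .
        have "w \<notin> R_t V A" using False wA vV unfolding Q_t_def by blast
        then obtain p where "p \<in> parents A w" "reticulation V A p" using rw unfolding R_t_def by blast
        then have "(p,w) \<in> ?B" unfolding arboreal_arcs_def parents_def by blast
        then have "(p,w) \<in> T" using BT by blast
        then have "p = v" using st_par[OF pn T _ wT] by blast
        then show False using nr \<open>reticulation V A p\<close> by simp
      qed
    qed
  qed
  have rootS: "is_root V ?S r"
  proof -
    have "indeg ?S r = 0" using indeg0[OF fS] nopar_r SA by blast
    moreover have "\<forall>v\<in>V. indeg ?S v = 0 \<longrightarrow> v = r" using indS by (metis Diff_iff empty_iff insert_iff zero_neq_one)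
    moreover have "\<forall>v\<in>V. (r, v) \<in> ?S\<^sup>*"
    proof
      fix v assume "v \<in> V"
      show "(r,v) \<in> ?S\<^sup>*"
      proof (rule reach[OF fS _ _ _ \<open>v \<in> V\<close>])
        show "acyclic ?S" using F(3) SA acyclic_subset by blast
        show "?S \<subseteq> V \<times> V" using F(2) SA by blast
        show "\<forall>v\<in>V - {r}. \<exists>u. (u, v) \<in> ?S" using upar by blast
      qed
    qed
    ultimately show ?thesis using rV unfolding is_root_def by blast
  qed
  show ?thesis unfolding support_tree_def using SA r rootS indS leaf by blast
qed

theorem theorem7:
  fixes V :: "'a set" and A A' :: "('a \<times> 'a) set" and X :: "'a set"
  assumes "phylo_network V A X"
    and "tree_based V A X"
    and "A' \<subseteq> A"
  shows "support_tree V A X A' \<longleftrightarrow>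
           (\<exists>E. supporting_set V A X E \<and> A' = arboreal_arcs V A X \<union> E)"
proof
  assume st: "support_tree V A X A'"
  have "A' = arboreal_arcs V A X \<union> (A' - arboreal_arcs V A X)"
    using st_arb[OF assms(1) st] by blast
  then show "\<exists>E. supporting_set V A X E \<and> A' = arboreal_arcs V A X \<union> E"
    using fwd[OF assms(1) st] by blast
next
  assume "\<exists>E. supporting_set V A X E \<and> A' = arboreal_arcs V A X \<union> E"
  then obtain E where E: "supporting_set V A X E" "A' = arboreal_arcs V A X \<union> E" by blast
  obtain T where T: "support_tree V A X T" using assms(2) unfolding tree_based_def by blast
  show "support_tree V A X A'" using bwd[OF assms(1) T E(1)] E(2) by simp
qed

end
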